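(* Let $q\ge1$ be an integer. Suppose there are constants $\varepsilon,\delta>0$ and a Borel set $K\subset[0,1)$ such that: (i) $e(q,x;\varepsilon,\delta)=1$ for $x\in K$ and $e(q,x;\varepsilon,\delta)\le2$ for $x\in[0,1)\setminus K$; (ii) if $(\mathbf{u},\mathbf{v})\in E(q,x;\varepsilon,\delta)$ for some $x\in[0,1)\setminus K$ with $\mathbf{u}\ne\mathbf{v}$, then both $x(\mathbf{u})\in K$ and $x(\mathbf{v})\in K$. Then $\sigma(q)\le\sqrt2$.
   Context: Standing setup: $b\ge2$ integer, $\mathcal{A}=\{0,\dots,b-1\}$, $\gamma\in(1/b,1)$, $\psi$ a $\mathbb{Z}$-periodic $C^1$ function. $S(x,\mathbf{i})=\sum_{n\ge1}\gamma^{n-1}\psi\big(\frac{x+i_1+i_2b+\cdots+i_nb^{n-1}}{b^n}\big)$, $S'=\partial_xS$. For $\mathbf{u}\in\mathcal{A}^q$, $x(\mathbf{u})=(x+u_1+u_2b+\cdots+u_qb^{q-1})/b^q$. Sequences $\mathbf{i},\mathbf{j}$ are $(\varepsilon,\delta)$-tangent at $x_0$ if $|S(x_0,\mathbf{i})-S(x_0,\mathbf{j})|\le\varepsilon$ and $|S'(x_0,\mathbf{i})-S'(x_0,\mathbf{j})|\le\delta$. $E(q,x_0;\varepsilon,\delta)$: pairs $(\mathbf{k},\mathbf{l})\in\mathcal{A}^q\times\mathcal{A}^q$ such that some concatenations $\mathbf{ku},\mathbf{lv}$ are $(\varepsilon,\delta)$-tangent at $x_0$; $e(q,x_0;\varepsilon,\delta)=\max_{\mathbf{k}}\#\{\mathbf{l}:(\mathbf{k},\mathbf{l})\in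 E(q,x_0;\varepsilon,\delta)\}$. Weight function: measurable $\omega:[0,1)\to(0,\infty)$ with $\omega,1/\omega$ bounded. Admissible testing function of order $q$: measurable $V:[0,1)\times\mathcal{A}^q\times\mathcal{A}^q\to[0,\infty)$ such that for some $\varepsilon,\delta>0$, $V(x,\mathbf{u},\mathbf{v})V(x,\mathbf{v},\mathbf{u})\ge1$ whenever $x\in[0,1)$ and $(\mathbf{u},\mathbf{v})\in E(q,x;\varepsilon,\delta)$. $\Sigma_{V,\omega}(x)=\sup_{\mathbf{u}}\frac{\omega(x)}{\omega(x(\mathbf{u}))}\sum_{\mathbf{v}}V(x,\mathbf{u},\mathbf{v})$; $\sigma(q)=\inf_{\omega,V}\|\Sigma_{V,\omega}\|_\infty$. *)

theory Defs
  imports "HOL-Analysis.Analysis" "HOL-Probability.Essential_Supremum"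
begin

text \<open>Digit sequences i = (i_1, i_2, ...) are encoded 0-based: i_n = i (n - 1).
  Finite words in A^q are lists of length q with entries < b: u_k = u ! (k - 1).\<close>

definition digit_seqs :: "nat \<Rightarrow> (nat \<Rightarrow> nat) set" where
  "digit_seqs b = {i. \<forall>n. i n < b}"

definition words :: "nat \<Rightarrow> nat \<Rightarrow> nat list set" where
  "words b q = {u. length u = q \<and> (\<forall>k<q. u ! k < b)}"

definition Sfun :: "nat \<Rightarrow> real \<Rightarrow> (real \<Rightarrow> real) \<Rightarrow> real \<Rightarrow> (nat \<Rightarrow> nat) \<Rightarrow> real" where
  "Sfun b \<gamma> \<psi> x i =
     (\<Sum>n. \<gamma> ^ n * \<psi> ((x + (\<Sum>k<Suc n. real (i k) * real b ^ k)) / real b ^ Suc n))"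

definition Sder :: "nat \<Rightarrow> real \<Rightarrow> (real \<Rightarrow> real) \<Rightarrow> real \<Rightarrow> (nat \<Rightarrow> nat) \<Rightarrow> real" where
  "Sder b \<gamma> \<psi> x i = deriv (\<lambda>y. Sfun b \<gamma> \<psi> y i) x"

definition xmap :: "nat \<Rightarrow> real \<Rightarrow> nat list \<Rightarrow> real" where
  "xmap b x u = (x + (\<Sum>k<length u. real (u ! k) * real b ^ k)) / real b ^ length u"

definition concat_seq :: "nat list \<Rightarrow> (nat \<Rightarrow> nat) \<Rightarrow> nat \<Rightarrow> nat" where
  "concat_seq k u = (\<lambda>n. if n < length k then k ! n else u (n - length k))"

definition tangent :: "nat \<Rightarrow> real \<Rightarrow> (real \<Rightarrow> real) \<Rightarrow> real \<Rightarrow> real \<Rightarrow> real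
    \<Rightarrow> (nat \<Rightarrow> nat) \<Rightarrow> (nat \<Rightarrow> nat) \<Rightarrow> bool" where
  "tangent b \<gamma> \<psi> \<epsilon> \<delta> x0 i j \<longleftrightarrow>
     \<bar>Sfun b \<gamma> \<psi> x0 i - Sfun b \<gamma> \<psi> x0 j\<bar> \<le> \<epsilon> \<and>
     \<bar>Sder b \<gamma> \<psi> x0 i - Sder b \<gamma> \<psi> x0 j\<bar> \<le> \<delta>"

definition Eset :: "nat \<Rightarrow> real \<Rightarrow> (real \<Rightarrow> real) \<Rightarrow> nat \<Rightarrow> real \<Rightarrow> real \<Rightarrow> real
    \<Rightarrow> (nat list \<times> nat list) set" where
  "Eset b \<gamma> \<psi> q x0 \<epsilon> \<delta> =
     {(k, l). k \<in> words b q \<and> l \<in> words b q \<and>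
        (\<exists>u\<in>digit_seqs b. \<exists>v\<in>digit_seqs b.
           tangent b \<gamma> \<psi> \<epsilon> \<delta> x0 (concat_seq k u) (concat_seq l v))}"

definition efun :: "nat \<Rightarrow> real \<Rightarrow> (real \<Rightarrow> real) \<Rightarrow> nat \<Rightarrow> real \<Rightarrow> real \<Rightarrow> real \<Rightarrow> nat" where
  "efun b \<gamma> \<psi> q x0 \<epsilon> \<delta> =
     Max ((\<lambda>k. card {l. (k, l) \<in> Eset b \<gamma> \<psi> q x0 \<epsilon> \<delta>}) ` words b q)"

definition weight_fun :: "(real \<Rightarrow> real) \<Rightarrow> bool" where
  "weight_fun \<omega> \<longleftrightarrow>
     \<omega> \<in> borel_measurable (restrict_space borel {0..<1}) \<and>
     (\<forall>x\<in>{0..<1}. \<omega> x > 0) \<and>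
     (\<exists>C. \<forall>x\<in>{0..<1}. \<omega> x \<le> C) \<and>
     (\<exists>C. \<forall>x\<in>{0..<1}. 1 / \<omega> x \<le> C)"

definition admissible_test :: "nat \<Rightarrow> real \<Rightarrow> (real \<Rightarrow> real) \<Rightarrow> nat
    \<Rightarrow> (real \<Rightarrow> nat list \<Rightarrow> nat list \<Rightarrow> real) \<Rightarrow> bool" where
  "admissible_test b \<gamma> \<psi> q V \<longleftrightarrow>
     (\<forall>u\<in>words b q. \<forall>v\<in>words b q.
        (\<lambda>x. V x u v) \<in> borel_measurable (restrict_space borel {0..<1}) \<and>
        (\<forall>x\<in>{0..<1}. V x u v \<ge> 0)) \<and>
     (\<exists>\<epsilon>>0. \<exists>\<delta>>0. \<forall>x\<in>{0..<1}. \<forall>u v. (u, v) \<in> Eset b \<gamma> \<psi> q x \<epsilon> \<delta> \<longrightarrow>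
        V x u v * V x v u \<ge> 1)"

definition SigmaVw :: "nat \<Rightarrow> nat \<Rightarrow> (real \<Rightarrow> nat list \<Rightarrow> nat list \<Rightarrow> real)
    \<Rightarrow> (real \<Rightarrow> real) \<Rightarrow> real \<Rightarrow> real" where
  "SigmaVw b q V \<omega> x =
     Max ((\<lambda>u. \<omega> x / \<omega> (xmap b x u) * (\<Sum>v\<in>words b q. V x u v)) ` words b q)"

definition sigma_q :: "nat \<Rightarrow> real \<Rightarrow> (real \<Rightarrow> real) \<Rightarrow> nat \<Rightarrow> ereal" where
  "sigma_q b \<gamma> \<psi> q =
     (INF p \<in> {(\<omega>, V). weight_fun \<omega> \<and> admissible_test b \<gamma> \<psi> q V}.
        esssup (restrict_space lborel {0..<1})
          (\<lambda>x. ereal (SigmaVw b q (snd p) (fst p) x)))"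

end

theory Submission
  imports Defs
begin

lemma periodic_nat: assumes "\<forall>x. g (x + 1) = (g x :: real)" shows "g (y + real n) = g y"
proof (induction n)
  case (Suc n)
  have "g (y + real (Suc n)) = g ((y + real n) + 1)" by (simp add: algebra_simps)
  then show ?case using assms[rule_format, of "y + real n"] Suc by simp
qed simp

lemma periodic_frac: fixes x :: real assumes "\<forall>x. g (x + 1) = (g x :: real)" shows "g x = g (frac x)"
proof (cases "\<lfloor>x\<rfloor> \<ge> 0")
  case True
  have "x = frac x + real (nat \<lfloor>x\<rfloor>)" using True by (simp add: frac_def)
  then show ?thesis using periodic_nat[OF assms, of "frac x" "nat \<lfloor>x\<rfloor>"] by simp
next
  case False
  have "frac x = x + real (nat (- \<lfloor>x\<rfloor>))" using False by (simp add: frac_def)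
  then show ?thesis using periodic_nat[OF assms, of x "nat (- \<lfloor>x\<rfloor>)"] by simp
qed

lemma periodic_bounded:
  fixes g :: "real \<Rightarrow> real"
  assumes "\<forall>x. g (x + 1) = (g x :: real)" "continuous_on {0..1} g"
  shows "\<exists>M. \<forall>x. \<bar>g x\<bar> \<le> M"
proof -
  have "compact (g ` {0..1})" by (rule compact_continuous_image[OF assms(2) compact_Icc])
  then have "bounded (g ` {0..1})" by (rule compact_imp_bounded)
  then obtain M where M: "\<forall>y\<in>g ` {0..1}. norm y \<le> M" unfolding bounded_iff by (elim exE)
  have "\<bar>g x\<bar> \<le> M" for x
  proof -
    have "frac x \<in> {0..1}" using frac_ge_0[of x] frac_lt_1[of x] by simp
    then have "g (frac x) \<in> g ` {0..1}" by (rule imageI)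
    from M[rule_format, OF this] have "\<bar>g (frac x)\<bar> \<le> M" by simp
    then show ?thesis using periodic_frac[OF assms(1), of x] by simp
  qed
  then show ?thesis by (intro exI[of _ M] allI)
qed

lemma deriv_periodic:
  assumes "\<forall>x. \<psi> (x + 1) = (\<psi> x :: real)" "\<psi> differentiable_on UNIV"
  shows "\<forall>x. deriv \<psi> (x + 1) = deriv \<psi> x"
proof
  fix x :: real
  have d: "DERIV \<psi> y :> deriv \<psi> y" for y
    using assms(2) unfolding differentiable_on_def DERIV_deriv_iff_real_differentiable by simp
  have "((\<lambda>x. \<psi> (x + 1)) has_field_derivative deriv \<psi> (x + 1)) (at x)"
    using DERIV_shift[THEN iffD1, OF d[of "x+1"]] .
  moreover have "(\<lambda>x. \<psi> (x + 1)) = \<psi>" using assms(1) by auto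
  ultimately have "DERIV \<psi> x :> deriv \<psi> (x + 1)" by simp
  from DERIV_imp_deriv[OF this] show "deriv \<psi> (x + 1) = deriv \<psi> x" by simp
qed

lemma S_C1:
  fixes b :: nat and \<gamma> :: real and \<psi> :: "real \<Rightarrow> real"
  assumes hb: "b \<ge> 1" and hg: "0 < \<gamma>" "\<gamma> < 1"
    and per: "\<forall>x. \<psi> (x + 1) = \<psi> x"
    and d1: "\<psi> differentiable_on UNIV" and d2: "continuous_on UNIV (deriv \<psi>)"
  shows "continuous_on UNIV (\<lambda>x. Sfun b \<gamma> \<psi> x i) \<and> continuous_on UNIV (\<lambda>x. Sder b \<gamma> \<psi> x i)"
proof -
  define B where "B n = real b ^ Suc n" for n
  define c where "c n = (\<Sum>k<Suc n. real (i k) * real b ^ k)" for n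
  define f where "f n x = \<gamma> ^ n * \<psi> ((x + c n) / B n)" for n x
  define f' where "f' n x = \<gamma> ^ n * (deriv \<psi> ((x + c n) / B n) * (1 / B n))" for n x
  have B1: "B n \<ge> 1" for n unfolding B_def by (rule one_le_power) (use hb in simp)
  have d: "DERIV \<psi> y :> deriv \<psi> y" for y
    using d1 unfolding differentiable_on_def DERIV_deriv_iff_real_differentiable by simp
  have cont\<psi>: "continuous_on UNIV \<psi>" by (rule differentiable_imp_continuous_on[OF d1])
  obtain M0 where M0: "\<forall>x. \<bar>\<psi> x\<bar> \<le> M0"
    using periodic_bounded[OF per continuous_on_subset[OF cont\<psi>]] by blast
  obtain M1 where M1: "\<forall>x. \<bar>deriv \<psi> x\<bar> \<le> M1"
    using periodic_bounded[OF deriv_periodic[OF per d1] continuous_on_subset[OF d2]] by blast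
  have df: "(f n has_field_derivative f' n x) (at x within UNIV)" for n x
  proof -
    have "((\<lambda>x. (x + c n) / B n) has_field_derivative (1 / B n)) (at x)"
      using B1[of n] by (auto intro!: derivative_eq_intros)
    from DERIV_cmult[OF DERIV_chain2[OF d this], of "\<gamma> ^ n"] show ?thesis
      unfolding f_def f'_def by simp
  qed
  have geo: "summable (\<lambda>n. \<gamma> ^ n)" using hg by (simp add: summable_geometric)
  have bnd': "norm (f' n x) \<le> M1 * \<gamma> ^ n" for n x
  proof -
    have "\<bar>deriv \<psi> ((x + c n) / B n) * (1 / B n)\<bar> \<le> M1"
    proof -
      have "\<bar>deriv \<psi> ((x + c n) / B n) * (1 / B n)\<bar> = \<bar>deriv \<psi> ((x + c n) / B n)\<bar> * (1 / B n)"
        using B1[of n] by (simp add: abs_mult)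
      also have "\<dots> \<le> \<bar>deriv \<psi> ((x + c n) / B n)\<bar> * 1"
        using B1[of n] by (intro mult_left_mono) auto
      also have "\<dots> \<le> M1" using M1 by simp
      finally show ?thesis .
    qed
    then have X: "\<gamma> ^ n * \<bar>deriv \<psi> ((x + c n) / B n) * (1 / B n)\<bar> \<le> \<gamma> ^ n * M1"
      using hg by (intro mult_left_mono) auto
    have A: "\<bar>\<gamma> ^ n\<bar> = \<gamma> ^ n" using hg by simp
    have "norm (f' n x) = \<gamma> ^ n * \<bar>deriv \<psi> ((x + c n) / B n) * (1 / B n)\<bar>"
      unfolding f'_def real_norm_def by (simp only: abs_mult A)
    with X show ?thesis by (simp add: mult.commute)
  qed
  have bnd: "norm (f n x) \<le> M0 * \<gamma> ^ n" for n x
    unfolding f_def using hg M0 by (simp add: abs_mult mult.commute mult_left_mono)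
  have ul: "uniform_limit UNIV (\<lambda>n x. \<Sum>i<n. f' i x) (\<lambda>x. \<Sum>i. f' i x) sequentially"
    by (rule Weierstrass_m_test[OF _ summable_mult[OF geo, of M1]]) (use bnd' in auto)
  have sm: "summable (\<lambda>n. f n 0)"
    by (rule summable_comparison_test'[OF summable_mult[OF geo, of M0], of 0]) (use bnd in auto)
  have D: "((\<lambda>x. \<Sum>n. f n x) has_field_derivative (\<Sum>n. f' n x)) (at x)" for x
    by (rule has_field_derivative_series'(2)[OF convex_UNIV df _ _ sm])
       (use ul uniformly_convergent_on_def in auto)
  have Seq: "(\<lambda>x. Sfun b \<gamma> \<psi> x i) = (\<lambda>x. \<Sum>n. f n x)"
    unfolding Sfun_def f_def B_def c_def by (rule refl)
  have Deq: "Sder b \<gamma> \<psi> x i = (\<Sum>n. f' n x)" for x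
    unfolding Sder_def Seq by (rule DERIV_imp_deriv[OF D])
  have c1: "continuous_on UNIV (\<lambda>x. Sfun b \<gamma> \<psi> x i)"
    unfolding Seq by (intro continuous_at_imp_continuous_on ballI DERIV_isCont[OF D])
  have cf': "continuous_on UNIV (f' n)" for n
  proof -
    have "continuous_on UNIV (\<lambda>x. deriv \<psi> ((x + c n) / B n))"
      by (rule continuous_on_compose2[OF d2]) (use B1[of n] in \<open>auto intro!: continuous_intros\<close>)
    then show ?thesis unfolding f'_def using B1[of n] by (auto intro!: continuous_intros)
  qed
  have ev: "\<forall>\<^sub>F n in sequentially. continuous_on UNIV (\<lambda>x. \<Sum>i<n. f' i x)"
    by (intro always_eventually allI continuous_on_sum cf')
  have "continuous_on UNIV (\<lambda>x. \<Sum>n. f' n x)"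
    using uniform_limit_theorem[OF ev ul] by simp
  moreover have "(\<lambda>x. Sder b \<gamma> \<psi> x i) = (\<lambda>x. \<Sum>n. f' n x)" using Deq by (rule ext)
  ultimately show ?thesis using c1 by (simp only:)
qed

lemma words_finite: "finite (words b q)"
proof (rule finite_subset[OF _ finite_lists_length_eq[OF finite_lessThan[of b], of q]])
  show "words b q \<subseteq> {xs. set xs \<subseteq> {..<b} \<and> length xs = q}"
    unfolding words_def by (auto simp: in_set_conv_nth)
qed

lemma words_nonempty: "replicate q 0 \<in> words b q" if "b \<ge> 1"
  using that unfolding words_def by auto

theorem lemma2p10:
  fixes b :: nat and \<gamma> :: real and \<psi> :: "real \<Rightarrow> real" and q :: nat
    and \<epsilon> \<delta> :: real and K :: "real set"
  assumes hb: "b \<ge> 2"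
    and h\<gamma>: "1 / real b < \<gamma>" "\<gamma> < 1"
    and h\<psi>per: "\<forall>x. \<psi> (x + 1) = \<psi> x"
    and h\<psi>C1: "\<psi> differentiable_on UNIV" "continuous_on UNIV (deriv \<psi>)"
    and hq: "q \<ge> 1"
    and h\<epsilon>: "\<epsilon> > 0" and h\<delta>: "\<delta> > 0"
    and hK: "K \<in> sets borel" "K \<subseteq> {0..<1}"
    and h1: "\<forall>x\<in>K. efun b \<gamma> \<psi> q x \<epsilon> \<delta> = 1"
    and h2: "\<forall>x\<in>{0..<1} - K. efun b \<gamma> \<psi> q x \<epsilon> \<delta> \<le> 2"
    and h3: "\<forall>x\<in>{0..<1} - K. \<forall>u v. (u, v) \<in> Eset b \<gamma> \<psi> q x \<epsilon> \<delta> \<and> u \<noteq> v \<longrightarrow>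
               xmap b x u \<in> K \<and> xmap b x v \<in> K"
  shows "sigma_q b \<gamma> \<psi> q \<le> ereal (sqrt 2)"
proof -
  have "0 < 1 / real b" using hb by simp
  then have g0: "\<gamma> > 0" using h\<gamma>(1) by linarith
  have cS: "continuous_on UNIV (\<lambda>x. Sfun b \<gamma> \<psi> x i)" "continuous_on UNIV (\<lambda>x. Sder b \<gamma> \<psi> x i)" for i
    using S_C1[of b \<gamma> \<psi> i] hb g0 h\<gamma>(2) h\<psi>per h\<psi>C1 by auto
  define W where "W = words b q"
  have Wfin: "finite W" unfolding W_def by (rule words_finite)
  have z: "(\<lambda>n. 0) \<in> digit_seqs b" using hb unfolding digit_seqs_def by auto
  define G where "G u v = {x. \<exists>i\<in>digit_seqs b. \<exists>j\<in>digit_seqs b.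
      \<bar>Sfun b \<gamma> \<psi> x (concat_seq u i) - Sfun b \<gamma> \<psi> x (concat_seq v j)\<bar> < \<epsilon> \<and>
      \<bar>Sder b \<gamma> \<psi> x (concat_seq u i) - Sder b \<gamma> \<psi> x (concat_seq v j)\<bar> < \<delta>}" for u v
  have Gopen: "open (G u v)" for u v
  proof -
    have "G u v = (\<Union>i\<in>digit_seqs b. \<Union>j\<in>digit_seqs b.
      {x. \<bar>Sfun b \<gamma> \<psi> x (concat_seq u i) - Sfun b \<gamma> \<psi> x (concat_seq v j)\<bar> < \<epsilon>} \<inter>
      {x. \<bar>Sder b \<gamma> \<psi> x (concat_seq u i) - Sder b \<gamma> \<psi> x (concat_seq v j)\<bar> < \<delta>})"
      unfolding G_def by auto
    moreover have "open ({x. \<bar>Sfun b \<gamma> \<psi> x (concat_seq u i) - Sfun b \<gamma> \<psi> x (concat_seq v j)\<bar> < \<epsilon>} \<inter>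
      {x. \<bar>Sder b \<gamma> \<psi> x (concat_seq u i) - Sder b \<gamma> \<psi> x (concat_seq v j)\<bar> < \<delta>})" for i j
      by (intro open_Int open_Collect_less continuous_intros cS)
    ultimately show ?thesis by (auto intro!: open_UN)
  qed
  have Gsub: "(u, v) \<in> Eset b \<gamma> \<psi> q x \<epsilon> \<delta>" if "x \<in> G u v" "u \<in> W" "v \<in> W" for x u v
    using that unfolding G_def Eset_def tangent_def W_def by (auto intro: less_imp_le)
  have Esub: "x \<in> G u v \<and> x \<in> G v u \<and> u \<in> W \<and> v \<in> W"
    if "(u, v) \<in> Eset b \<gamma> \<psi> q x (\<epsilon>/2) (\<delta>/2)" for x u v
  proof -
    from that obtain i j where ij: "u \<in> W" "v \<in> W" "i \<in> digit_seqs b" "j \<in> digit_seqs b"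
      "tangent b \<gamma> \<psi> (\<epsilon>/2) (\<delta>/2) x (concat_seq u i) (concat_seq v j)"
      unfolding Eset_def W_def by auto
    define S1 where "S1 = Sfun b \<gamma> \<psi> x (concat_seq u i)"
    define S2 where "S2 = Sfun b \<gamma> \<psi> x (concat_seq v j)"
    define D1 where "D1 = Sder b \<gamma> \<psi> x (concat_seq u i)"
    define D2 where "D2 = Sder b \<gamma> \<psi> x (concat_seq v j)"
    have t: "\<bar>S1 - S2\<bar> \<le> \<epsilon>/2" "\<bar>D1 - D2\<bar> \<le> \<delta>/2"
      using ij(5) unfolding tangent_def S1_def S2_def D1_def D2_def by auto
    have a: "\<bar>S1 - S2\<bar> < \<epsilon>" "\<bar>D1 - D2\<bar> < \<delta>" "\<bar>S2 - S1\<bar> < \<epsilon>" "\<bar>D2 - D1\<bar> < \<delta>"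
      using t h\<epsilon> h\<delta> by (auto simp: abs_minus_commute)
    have "x \<in> G u v" unfolding G_def using ij(3,4) a(1,2)
      unfolding S1_def S2_def D1_def D2_def by blast
    moreover have "x \<in> G v u" unfolding G_def using ij(3,4) a(3,4)
      unfolding S1_def S2_def D1_def D2_def by blast
    ultimately show ?thesis using ij(1,2) by blast
  qed
  have diag: "(u, u) \<in> Eset b \<gamma> \<psi> q x \<epsilon> \<delta>" if "u \<in> W" for u x
  proof -
    have "tangent b \<gamma> \<psi> \<epsilon> \<delta> x (concat_seq u (\<lambda>n. 0)) (concat_seq u (\<lambda>n. 0))"
      unfolding tangent_def using h\<epsilon> h\<delta> by simp
    then show ?thesis using that z unfolding Eset_def W_def by blast
  qed
  have cardE: "card {l. (u, l) \<in> Eset b \<gamma> \<psi> q x \<epsilon> \<delta>} \<le> efun b \<gamma> \<psi> q x \<epsilon> \<delta>"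
    if "u \<in> W" for u x
    unfolding efun_def using that Wfin W_def by (intro Max_ge) auto
  have finE: "finite {l. (u, l) \<in> Eset b \<gamma> \<psi> q x \<epsilon> \<delta>}" for u x
    by (rule finite_subset[OF _ Wfin]) (auto simp: Eset_def W_def)
  have inK: "u = v" if "x \<in> K" "(u, v) \<in> Eset b \<gamma> \<psi> q x \<epsilon> \<delta>" for x u v
  proof (rule ccontr)
    assume ne: "u \<noteq> v"
    have uW: "u \<in> W" using that(2) unfolding Eset_def W_def by auto
    have "{u, v} \<subseteq> {l. (u, l) \<in> Eset b \<gamma> \<psi> q x \<epsilon> \<delta>}" using diag[OF uW] that(2) by auto
    then have "card {u, v} \<le> card {l. (u, l) \<in> Eset b \<gamma> \<psi> q x \<epsilon> \<delta>}" by (rule card_mono[OF finE])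
    also have "\<dots> \<le> 1" using cardE[OF uW, of x] h1 that(1) by auto
    finally show False using ne by simp
  qed
  define \<omega> :: "real \<Rightarrow> real" where "\<omega> x = (if x \<in> K then sqrt 2 else 1)" for x
  define V :: "real \<Rightarrow> nat list \<Rightarrow> nat list \<Rightarrow> real"
    where "V x u v = (if u = v \<or> (x \<notin> K \<and> x \<in> G u v) then 1 else 0)" for x u v
  have [measurable]: "K \<in> sets borel" using hK(1) .
  have [measurable]: "G u v \<in> sets borel" for u v using Gopen by auto
  have \<omega>meas: "\<omega> \<in> borel_measurable borel" unfolding \<omega>_def by measurable
  have Vmeas: "(\<lambda>x. V x u v) \<in> borel_measurable borel" for u v unfolding V_def by measurable
  have wf: "weight_fun \<omega>"
    unfolding weight_fun_def
  proof (intro conjI)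
    show "\<omega> \<in> borel_measurable (restrict_space borel {0..<1})"
      by (rule measurable_restrict_space1[OF \<omega>meas])
    show "\<forall>x\<in>{0..<1}. 0 < \<omega> x" unfolding \<omega>_def by auto
    show "\<exists>C. \<forall>x\<in>{0..<1}. \<omega> x \<le> C" by (rule exI[of _ "sqrt 2"]) (auto simp: \<omega>_def)
    show "\<exists>C. \<forall>x\<in>{0..<1}. 1 / \<omega> x \<le> C" by (rule exI[of _ 1]) (auto simp: \<omega>_def)
  qed
  have admM: "(\<lambda>x. V x u v) \<in> borel_measurable (restrict_space borel {0..<1})" for u v
    by (rule measurable_restrict_space1[OF Vmeas])
  have admN: "0 \<le> V x u v" for x u v unfolding V_def by auto
  have admP: "1 \<le> V x u v * V x v u"
    if x: "x \<in> {0..<1::real}" and e: "(u, v) \<in> Eset b \<gamma> \<psi> q x (\<epsilon>/2) (\<delta>/2)" for x u v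
  proof (cases "u = v")
    case True then show ?thesis by (simp add: V_def)
  next
    case False
    from Esub[OF e] have G: "x \<in> G u v" "x \<in> G v u" "u \<in> W" "v \<in> W" by auto
    have "x \<notin> K" using inK[OF _ Gsub[OF G(1) G(3) G(4)]] False by auto
    then show ?thesis using G by (simp add: V_def)
  qed
  have e2: "\<epsilon>/2 > 0" "\<delta>/2 > 0" using h\<epsilon> h\<delta> by auto
  have adm: "admissible_test b \<gamma> \<psi> q V"
    unfolding admissible_test_def using admM admN admP e2 by blast
  have term_bd: "\<omega> x / \<omega> (xmap b x u) * (\<Sum>v\<in>W. V x u v) \<le> sqrt 2"
    if x: "x \<in> {0..<1}" and uW: "u \<in> W" for x u
  proof -
    define P where "P v = (u = v \<or> (x \<notin> K \<and> x \<in> G u v))" for v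
    have sumeq: "(\<Sum>v\<in>W. V x u v) = real (card {v\<in>W. P v})"
      unfolding V_def P_def[symmetric] using sum.inter_filter[OF Wfin, of "\<lambda>_. (1::real)" P] by simp
    have w1: "\<omega> y \<ge> 1" for y unfolding \<omega>_def by auto
    have s2: "sqrt 2 \<ge> (1::real)" by simp
    show ?thesis
    proof (cases "x \<in> K")
      case True
      have "{v\<in>W. P v} = {u}" using uW True unfolding P_def by auto
      then have "\<omega> x / \<omega> (xmap b x u) * (\<Sum>v\<in>W. V x u v) = sqrt 2 / \<omega> (xmap b x u)"
        using sumeq True by (simp add: \<omega>_def)
      also have "\<dots> \<le> sqrt 2" using w1[of "xmap b x u"] by (simp add: divide_le_eq)
      finally show ?thesis .
    next
      case False
      have xK: "x \<in> {0..<1} - K" using x False by auto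
      have sub: "{v\<in>W. P v} \<subseteq> {l. (u, l) \<in> Eset b \<gamma> \<psi> q x \<epsilon> \<delta>}"
        using diag[OF uW] Gsub uW unfolding P_def by auto
      have c2: "card {v\<in>W. P v} \<le> 2"
        using card_mono[OF finE sub] cardE[OF uW, of x] h2 xK by force
      show ?thesis
      proof (cases "\<exists>v\<in>W. P v \<and> v \<noteq> u")
        case True
        then obtain v where v: "v \<in> W" "P v" "v \<noteq> u" by auto
        have "(u, v) \<in> Eset b \<gamma> \<psi> q x \<epsilon> \<delta>" using v Gsub uW unfolding P_def by auto
        then have "xmap b x u \<in> K" using h3[rule_format, OF xK, of u v] v(3) by auto
        then have "\<omega> x / \<omega> (xmap b x u) * (\<Sum>v\<in>W. V x u v) = real (card {v\<in>W. P v}) / sqrt 2"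
          using sumeq False by (simp add: \<omega>_def)
        also have "\<dots> \<le> 2 / sqrt 2" using c2 by (intro divide_right_mono) auto
        also have "\<dots> = sqrt 2" by (metis real_div_sqrt zero_le_numeral)
        finally show ?thesis .
      next
        case False
        have "{v\<in>W. P v} = {u}" using uW False unfolding P_def by auto
        then have "\<omega> x / \<omega> (xmap b x u) * (\<Sum>v\<in>W. V x u v) = 1 / \<omega> (xmap b x u)"
          using sumeq \<open>x \<notin> K\<close> by (simp add: \<omega>_def)
        also have "\<dots> \<le> 1" using w1[of "xmap b x u"] by simp
        finally show ?thesis using s2 by linarith
      qed
    qed
  qed
  have Wne: "W \<noteq> {}" using words_nonempty[of b q] hb unfolding W_def by auto
  have Sig_bd: "SigmaVw b q V \<omega> x \<le> sqrt 2" if "x \<in> {0..<1}" for x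
    unfolding SigmaVw_def W_def[symmetric] using Wfin Wne term_bd[OF that] by auto
  have xmap_meas: "(\<lambda>x. xmap b x u) \<in> borel_measurable borel" for u
    unfolding xmap_def using hb by (intro borel_measurable_continuous_onI continuous_intros) auto
  have Sig_meas: "(\<lambda>x. SigmaVw b q V \<omega> x) \<in> borel_measurable borel"
    unfolding SigmaVw_def
  proof (rule borel_measurable_Max[OF words_finite])
    fix u
    have "(\<lambda>x. \<omega> (xmap b x u)) \<in> borel_measurable borel"
      using measurable_compose[OF xmap_meas \<omega>meas] by (simp add: o_def)
    then show "(\<lambda>x. \<omega> x / \<omega> (xmap b x u) * (\<Sum>v\<in>words b q. V x u v)) \<in> borel_measurable borel"
      using \<omega>meas Vmeas by measurable
  qed
  have M: "(\<lambda>x. ereal (SigmaVw b q V \<omega> x)) \<in> borel_measurable (restrict_space lborel {0..<1})"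
    by (rule measurable_restrict_space1) (use Sig_meas in simp)
  have ess: "esssup (restrict_space lborel {0..<1}) (\<lambda>x. ereal (SigmaVw b q V \<omega> x)) \<le> ereal (sqrt 2)"
    by (rule esssup_I[OF M]) (use Sig_bd in auto)
  show ?thesis unfolding sigma_q_def
    by (rule INF_lower2[of "(\<omega>, V)"]) (use wf adm ess in auto)
qed

end
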